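(* Let $\mathcal{K}$ be a closed convex cone in a finite-dimensional Euclidean space with $\dim\mathcal{K}>1$. Then there exists $\alpha>-1$ such that $$\sup_{y\in\mathcal{K},\ \|y\|=1}\langle x,y\rangle\ge\alpha\quad\text{for all }x\in\operatorname{span}\mathcal{K}\text{ with }\|x\|=1.$$ *)

theory Defs
  imports "HOL-Analysis.Analysis"
begin

end

theory Submission
  imports Defs
begin

lemma two_unit_points:
  fixes K :: "'a::euclidean_space set"
  assumes "cone K" and "dim K > 1"
  shows "\<exists>a b. a \<in> K \<and> b \<in> K \<and> norm a = 1 \<and> norm b = 1 \<and> a \<noteq> b"
proof (rule ccontr)
  assume H: "\<not> ?thesis"
  have sc: "\<And>v c. v \<in> K \<Longrightarrow> c \<ge> 0 \<Longrightarrow> c *\<^sub>R v \<in> K"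
    using assms(1) by (simp add: cone_def)
  obtain u where u: "K \<subseteq> span {u}"
  proof (cases "K \<subseteq> {0}")
    case True
    then show ?thesis using that[of 0] by auto
  next
    case False
    then obtain u where uK: "u \<in> K" and u0: "u \<noteq> 0" by auto
    have "K \<subseteq> span {u}"
    proof
      fix v assume vK: "v \<in> K"
      show "v \<in> span {u}"
      proof (cases "v = 0")
        case True then show ?thesis by (simp add: span_zero)
      next
        case False
        have "(1 / norm v) *\<^sub>R v \<in> K" "(1 / norm u) *\<^sub>R u \<in> K"
          using sc vK uK by auto
        moreover have "norm ((1 / norm v) *\<^sub>R v) = 1" "norm ((1 / norm u) *\<^sub>R u) = 1"
          using False u0 by auto
        ultimately have eq: "(1 / norm v) *\<^sub>R v = (1 / norm u) *\<^sub>R u" using H by blast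
        have "v = norm v *\<^sub>R ((1 / norm v) *\<^sub>R v)" using False by simp
        also have "\<dots> = (norm v / norm u) *\<^sub>R u" using eq by simp
        finally show ?thesis by (metis span_base span_mul insertI1)
      qed
    qed
    then show ?thesis using that by blast
  qed
  have "dim K \<le> card {u}" by (rule dim_le_card[OF u]) simp
  then show False using assms(2) by simp
qed

theorem proposition4p3:
  fixes K :: "'a::euclidean_space set"
  assumes "closed K" and "convex K" and "cone K" and "dim K > 1"
  shows "\<exists>\<alpha>::real. \<alpha> > -1 \<and>
           (\<forall>x\<in>span K. norm x = 1 \<longrightarrow>
              (SUP y\<in>{y\<in>K. norm y = 1}. x \<bullet> y) \<ge> \<alpha>)"
proof -
  obtain a b where ab: "a \<in> K" "b \<in> K" "norm a = 1" "norm b = 1" "a \<noteq> b"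
    using two_unit_points[OF assms(3,4)] by blast
  define d where "d = norm (a - b)"
  have dpos: "d > 0" using ab(5) by (simp add: d_def)
  show ?thesis
  proof (intro exI[of _ "-1 + d^2/8"] conjI ballI impI)
    show "-1 < -1 + d^2/8" using dpos by simp
  next
    fix x :: 'a assume "x \<in> span K" and nx: "norm x = 1"
    let ?S = "{y\<in>K. norm y = 1}"
    have bdd: "bdd_above ((\<lambda>y. x \<bullet> y) ` ?S)"
    proof (rule bdd_aboveI2)
      fix y assume "y \<in> ?S"
      then show "x \<bullet> y \<le> 1" using norm_cauchy_schwarz[of x y] nx by auto
    qed
    have ua: "x \<bullet> a \<le> (SUP y\<in>?S. x \<bullet> y)"
      by (rule cSUP_upper[OF _ bdd]) (use ab in auto)
    have ub: "x \<bullet> b \<le> (SUP y\<in>?S. x \<bullet> y)"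
      by (rule cSUP_upper[OF _ bdd]) (use ab in auto)
    have na: "norm (x + a)^2 = 2 + 2 * (x \<bullet> a)"
      proof -
      have "x \<bullet> x = 1" "a \<bullet> a = 1" using nx ab(3) by (simp_all add: norm_eq_1)
      then show ?thesis by (simp add: power2_norm_eq_inner inner_add_left inner_add_right inner_commute)
    qed
    have nb: "norm (x + b)^2 = 2 + 2 * (x \<bullet> b)"
      proof -
      have "x \<bullet> x = 1" "b \<bullet> b = 1" using nx ab(4) by (simp_all add: norm_eq_1)
      then show ?thesis by (simp add: power2_norm_eq_inner inner_add_left inner_add_right inner_commute)
    qed
    have "d \<le> norm (x + a) + norm (x + b)"
      unfolding d_def by (metis norm_triangle_ineq4 diff_diff_eq2 add_diff_cancel_left' norm_minus_commute
          add.commute diff_add_eq_diff_diff_swap)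
    hence "d^2 \<le> (norm (x + a) + norm (x + b))^2"
      using dpos by (intro power_mono) auto
    also have "\<dots> \<le> 2 * (norm (x + a)^2 + norm (x + b)^2)"
      by (smt (verit) sum_squares_ge_zero power2_sum power2_diff zero_le_power2
          [of "norm (x+a) - norm (x+b)"])
    finally have "d^2 \<le> 2 * (4 + 2 * (x \<bullet> a) + 2 * (x \<bullet> b))" using na nb by simp
    moreover have "\<And>s p q D. (D::real) \<le> 2 * (4 + 2 * p + 2 * q) \<Longrightarrow> p \<le> (s::real) \<Longrightarrow> q \<le> s \<Longrightarrow> -1 + D/8 \<le> s"
      by (simp add: field_simps)
    ultimately show "-1 + d^2/8 \<le> (SUP y\<in>?S. x \<bullet> y)" using ua ub by blast
  qed
qed

end
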